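(* Let $1<p\leqslant2$, let $0<\varepsilon\leqslant1$, and set $c=c(\varepsilon,p)\coloneqq\frac14\,\varepsilon^{\frac{2(p+1)}{p}}(p-1)$. Let $n,d$ be positive integers with $n\geqslant 2d/c$, and let $\boldsymbol{X}$ be a dissociated, $d$-dimensional random array on $[n]$ whose entries take values in a measurable space $\mathcal{X}$. Then for every measurable $f\colon\mathcal{X}^{\binom{[n]}{d}}\to\mathbb{R}$ with $\mathbb{E}[f(\boldsymbol{X})]=0$ and $\|f(\boldsymbol{X})\|_{L_p}=1$ there exists an interval $I$ of $[n]$ with $|I|\geqslant cn$ such that for every $J\subseteq I$ with $|J|\geqslant d$, \[ \mathbb{P}\big(\big|\mathbb{E}[f(\boldsymbol{X})\,|\,\mathcal{F}_J]\big|\leqslant\varepsilon\big)\geqslant1-\varepsilon. \]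
   Context: $[n]=\{1,\dots,n\}$, $\binom{I}{d}$ is the set of $d$-element subsets of $I$. A $d$-dimensional random array on $[n]$ is a process $\boldsymbol{X}=\langle X_s:s\in\binom{[n]}{d}\rangle$; for $J\subseteq[n]$ with $|J|\geqslant d$, $\mathcal{F}_J=\sigma(\{X_s:s\in\binom{J}{d}\})$. $\boldsymbol{X}$ is dissociated if for every $J,K\subseteq[n]$ with $|J|,|K|\geqslant d$ and $\max(J)<\min(K)$ the $\sigma$-algebras $\mathcal{F}_J$ and $\mathcal{F}_K$ are independent. An interval of $[n]$ is a set of consecutive integers. *)

theory Defs
  imports "HOL-Probability.Probability"
begin

definition dsubsets :: "nat \<Rightarrow> nat set \<Rightarrow> nat set set" where
  "dsubsets d J = {s. s \<subseteq> J \<and> card s = d}"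

definition arr_vec :: "nat \<Rightarrow> nat set \<Rightarrow> (nat set \<Rightarrow> 'a \<Rightarrow> 'b) \<Rightarrow> 'a \<Rightarrow> (nat set \<Rightarrow> 'b)" where
  "arr_vec d J X \<omega> = (\<lambda>s\<in>dsubsets d J. X s \<omega>)"

definition arr_sigma :: "'a measure \<Rightarrow> 'b measure \<Rightarrow> (nat set \<Rightarrow> 'a \<Rightarrow> 'b) \<Rightarrow> nat \<Rightarrow> nat set \<Rightarrow> 'a measure" where
  "arr_sigma M N X d J =
     sigma (space M) (\<Union>s\<in>dsubsets d J. {X s -` A \<inter> space M | A. A \<in> sets N})"

definition dissociated :: "'a measure \<Rightarrow> 'b measure \<Rightarrow> (nat set \<Rightarrow> 'a \<Rightarrow> 'b) \<Rightarrow> nat \<Rightarrow> nat \<Rightarrow> bool" where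
  "dissociated M N X d n \<longleftrightarrow>
     (\<forall>J K. J \<subseteq> {1..n} \<and> K \<subseteq> {1..n} \<and> card J \<ge> d \<and> card K \<ge> d \<and> J \<noteq> {} \<and> K \<noteq> {}
        \<and> Max J < Min K \<longrightarrow>
        prob_space.indep_set M (sets (arr_sigma M N X d J)) (sets (arr_sigma M N X d K)))"

definition cconst :: "real \<Rightarrow> real \<Rightarrow> real" where
  "cconst \<epsilon> p = 1/4 * \<epsilon> powr (2 * (p + 1) / p) * (p - 1)"

end

theory Submission
  imports Defs "HOL-Analysis.Analysis" "HOL-Probability.Probability"
begin

lemma young0:
  fixes a b al be :: real
  assumes "0 \<le> al" "0 \<le> be" "al + be = 1" "0 \<le> a" "0 \<le> b"
  shows "a powr al * b powr be \<le> al * a + be * b"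
proof (cases "a = 0 \<or> b = 0")
  case True then show ?thesis using assms by auto
next
  case False then show ?thesis using Youngs_inequality_0[of al be a b] assms by auto
qed

lemma concave_powr2:
  fixes r l x y :: real
  assumes r: "0 < r" "r \<le> 1" and l: "0 \<le> l" "l \<le> 1" and xy: "0 \<le> x" "0 \<le> y"
  shows "(1 - l) * x powr r + l * y powr r \<le> ((1 - l) * x + l * y) powr r"
proof -
  define m where "m = (1 - l) * x + l * y"
  have m0: "0 \<le> m" unfolding m_def using l xy by auto
  show ?thesis
  proof (cases "m = 0")
    case True
    then have "(1 - l) * x = 0" "l * y = 0" unfolding m_def using l xy
      by (smt (verit) mult_nonneg_nonneg)+
    then have "(1 - l) * x powr r = 0" "l * y powr r = 0"
      by (metis mult_eq_0_iff powr_0)+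
    then have "(1 - l) * x powr r + l * y powr r = 0" by linarith
    moreover have "((1 - l) * x + l * y) powr r = 0" using True m_def by simp
    ultimately show ?thesis by linarith
  next
    case False
    then have mp: "0 < m" using m0 by auto
    have 1: "x powr r * m powr (1 - r) \<le> r * x + (1 - r) * m"
      using young0[of r "1-r" x m] r xy mp by auto
    have 2: "y powr r * m powr (1 - r) \<le> r * y + (1 - r) * m"
      using young0[of r "1-r" y m] r xy mp by auto
    have "((1 - l) * x powr r + l * y powr r) * m powr (1 - r)
        = (1 - l) * (x powr r * m powr (1 - r)) + l * (y powr r * m powr (1 - r))"
      by (simp add: algebra_simps)
    also have "\<dots> \<le> (1 - l) * (r * x + (1 - r) * m) + l * (r * y + (1 - r) * m)"
      using 1 2 l by (intro add_mono mult_left_mono) auto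
    also have "\<dots> = m" unfolding m_def by (simp add: algebra_simps)
    also have "\<dots> = m powr r * m powr (1 - r)"
      using mp by (simp add: powr_add[symmetric])
    finally have "((1 - l) * x powr r + l * y powr r) * m powr (1 - r) \<le> m powr r * m powr (1 - r)" .
    then show ?thesis unfolding m_def[symmetric] using mp by (simp add: mult_le_cancel_right)
  qed
qed

lemma bernoulli_powr:
  fixes r x :: real
  assumes "0 \<le> r" "r \<le> 1" "0 \<le> x"
  shows "(1 + x) powr r \<le> 1 + r * x"
  using young0[of r "1-r" "1+x" 1] assms by (simp add: algebra_simps)

lemma power_mean2:
  fixes p A B :: real
  assumes p: "1 < p" "p \<le> 2" and AB: "0 \<le> A" "0 \<le> B"
  shows "(A powr p + B powr p) / 2 \<le> ((A^2 + B^2) / 2) powr (p / 2)"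
proof -
  have "(1 - 1/2) * (A^2) powr (p/2) + (1/2) * (B^2) powr (p/2) \<le> ((1 - 1/2) * A^2 + (1/2) * B^2) powr (p/2)"
    using p by (intro concave_powr2) auto
  moreover have "(A^2) powr (p/2) = A powr p" using AB
    by (simp add: powr_powr powr_numeral[symmetric] del: powr_numeral)
  moreover have "(B^2) powr (p/2) = B powr p" using AB
    by (simp add: powr_powr powr_numeral[symmetric] del: powr_numeral)
  ultimately show ?thesis by (simp add: field_simps)
qed

lemma amgm_aux:
  fixes s x :: real
  assumes "s \<le> 0" "0 \<le> x" "x < 1"
  shows "2 \<le> (1 + x) powr s + (1 - x) powr s"
proof -
  define u where "u = (1 + x) powr s"
  define v where "v = (1 - x) powr s"
  have up: "0 < u" "0 < v" using assms unfolding u_def v_def by auto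
  have "u * v = ((1 + x) * (1 - x)) powr s" unfolding u_def v_def using assms
    by (simp add: powr_mult)
  also have "\<dots> = 1 / ((1 + x) * (1 - x)) powr (- s)"
    using assms by (simp add: powr_minus divide_inverse)
  finally have uv: "u * v = 1 / ((1 + x) * (1 - x)) powr (- s)" .
  have "((1 + x) * (1 - x)) powr (- s) \<le> 1"
  proof (intro powr_le1)
    have "(1 + x) * (1 - x) = 1 - x * x" by (simp add: algebra_simps)
    moreover have "x * x < 1" using assms by (smt (verit) mult_less_cancel_right1)
    moreover have "0 \<le> x * x" by simp
    ultimately show "\<bar>(1 + x) * (1 - x)\<bar> \<le> 1" by simp
  qed (use assms in auto)
  moreover have "0 < ((1 + x) * (1 - x)) powr (- s)" using assms by auto
  ultimately have "1 \<le> u * v" using uv by simp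
  have "4 * (u * v) \<le> (u + v)^2"
    using sum_squares_ge_zero[of "u - v" 0] by (simp add: power2_eq_square algebra_simps)
  with \<open>1 \<le> u * v\<close> have "4 \<le> (u + v)^2" by linarith
  then have "2 \<le> u + v" using up
    using power2_le_imp_le[of 2 "u + v"] by simp
  then show ?thesis unfolding u_def v_def .
qed

lemma kfun_nonneg:
  fixes p b :: real
  assumes p: "1 < p" "p \<le> 2" and b: "0 \<le> b" "b < 1"
  shows "0 \<le> (1 + b) powr (p - 1) - (1 - b) powr (p - 1) - 2 * (p - 1) * b"
proof -
  let ?k = "\<lambda>x::real. (1 + x) powr (p - 1) - (1 - x) powr (p - 1) - 2 * (p - 1) * x"
  have "?k 0 \<le> ?k b"
  proof (rule DERIV_nonneg_imp_nondecreasing[OF b(1)])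
    fix x assume x: "0 \<le> x" "x \<le> b"
    then have x1: "x < 1" using b by auto
    have "0 \<le> x \<Longrightarrow> x < 1 \<Longrightarrow> DERIV ?k x :> (p - 1) * (1 + x) powr (p - 2) + (p - 1) * (1 - x) powr (p - 2) - (2 * p - 2)"
      by (rule derivative_eq_intros refl | simp)+
    then have "DERIV ?k x :> (p - 1) * (1 + x) powr (p - 2) + (p - 1) * (1 - x) powr (p - 2) - (2 * p - 2)"
      using x x1 by blast
    moreover have "0 \<le> (p - 1) * (1 + x) powr (p - 2) + (p - 1) * (1 - x) powr (p - 2) - (2 * p - 2)"
    proof -
      have "2 \<le> (1 + x) powr (p - 2) + (1 - x) powr (p - 2)"
        using amgm_aux[of "p - 2" x] p x x1 by auto
      then have "0 \<le> (p - 1) * ((1 + x) powr (p - 2) + (1 - x) powr (p - 2) - 2)"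
        using p by auto
      then show ?thesis by (simp add: algebra_simps)
    qed
    ultimately show "\<exists>y. DERIV ?k x :> y \<and> 0 \<le> y" by blast
  qed
  then show ?thesis by simp
qed

lemma hfun_nonneg:
  fixes p b :: real
  assumes p: "1 < p" "p \<le> 2" and b: "0 \<le> b" "b \<le> 1"
  shows "2 + p * (p - 1) * b^2 \<le> (1 + b) powr p + (1 - b) powr p"
proof -
  let ?h = "\<lambda>x::real. (1 + x) powr p + (1 - x) powr p - 2 - p * (p - 1) * x^2"
  have "?h 0 \<le> ?h b"
  proof (rule DERIV_nonneg_imp_increasing_open[OF b(1)])
    fix x assume x: "0 < x" "x < b"
    then have x1: "x < 1" using b by auto
    have "0 < x \<Longrightarrow> x < 1 \<Longrightarrow> DERIV ?h x :> p * (1 + x) powr (p - 1) - p * (1 - x) powr (p - 1) - 2 * x * (p * (p - 1))"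
      by (rule derivative_eq_intros refl | simp)+
    then have "DERIV ?h x :> p * (1 + x) powr (p - 1) - p * (1 - x) powr (p - 1) - 2 * x * (p * (p - 1))"
      using x x1 by blast
    moreover have "0 \<le> p * (1 + x) powr (p - 1) - p * (1 - x) powr (p - 1) - 2 * x * (p * (p - 1))"
    proof -
      have "0 \<le> p * ((1 + x) powr (p - 1) - (1 - x) powr (p - 1) - 2 * (p - 1) * x)"
        using kfun_nonneg[OF p, of x] x x1 p by auto
      then show ?thesis by (simp add: algebra_simps)
    qed
    ultimately show "\<exists>y. DERIV ?h x :> y \<and> 0 \<le> y" by blast
  next
    show "continuous_on {0..b} ?h"
      using b p by (intro continuous_intros continuous_on_powr') auto
  qed
  then show ?thesis by simp
qed

lemma two_point_le:
  fixes p a b :: real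
  assumes p: "1 < p" "p \<le> 2" and a: "a \<noteq> 0" and ba: "\<bar>b\<bar> \<le> \<bar>a\<bar>"
  shows "(a^2 + (p - 1) * b^2) powr (p / 2) \<le> (\<bar>a + b\<bar> powr p + \<bar>a - b\<bar> powr p) / 2"
proof -
  define t where "t = \<bar>b\<bar> / \<bar>a\<bar>"
  have aa: "0 < \<bar>a\<bar>" using a by auto
  have t0: "0 \<le> t" and t1: "t \<le> 1" unfolding t_def using ba aa by (auto simp: divide_le_eq_1)
  have bt: "\<bar>b\<bar> = \<bar>a\<bar> * t" unfolding t_def using aa by simp
  have sum: "\<bar>a + b\<bar> powr p + \<bar>a - b\<bar> powr p = \<bar>a\<bar> powr p * ((1 + t) powr p + (1 - t) powr p)"
  proof -
    have e1: "\<bar>a + b\<bar> = \<bar>a\<bar> * \<bar>1 + b / a\<bar>" "\<bar>a - b\<bar> = \<bar>a\<bar> * \<bar>1 - b / a\<bar>"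
      using a by (simp_all add: abs_mult[symmetric] algebra_simps)
    have tt: "\<bar>b / a\<bar> = t" unfolding t_def by (simp add: abs_divide)
    have "\<bar>1 + b / a\<bar> powr p + \<bar>1 - b / a\<bar> powr p = (1 + t) powr p + (1 - t) powr p"
    proof (cases "0 \<le> b / a")
      case True
      then have "b / a = t" using tt by (metis abs_of_nonneg)
      then show ?thesis using t1 t0 by simp
    next
      case False
      then have "b / a = - t" using tt by (metis abs_of_neg minus_minus not_le)
      then show ?thesis using t1 t0 by simp
    qed
    moreover have "\<bar>a + b\<bar> powr p + \<bar>a - b\<bar> powr p = \<bar>a\<bar> powr p * (\<bar>1 + b / a\<bar> powr p + \<bar>1 - b / a\<bar> powr p)"
      unfolding e1 by (simp add: powr_mult distrib_left)
    ultimately show ?thesis by simp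
  qed
  have "(a^2 + (p - 1) * b^2) = a^2 * (1 + (p - 1) * t^2)"
  proof -
    have "b^2 = a^2 * t^2" using bt by (metis power2_abs power_mult_distrib)
    then show ?thesis by (simp add: algebra_simps)
  qed
  then have "(a^2 + (p - 1) * b^2) powr (p / 2) = (a^2) powr (p / 2) * (1 + (p - 1) * t^2) powr (p / 2)"
    using p by (simp add: powr_mult)
  also have "(a^2) powr (p / 2) = \<bar>a\<bar> powr p"
  proof -
    have "(a^2) powr (p / 2) = (\<bar>a\<bar> powr 2) powr (p / 2)" by simp
    also have "\<dots> = \<bar>a\<bar> powr p" by (subst powr_powr) simp
    finally show ?thesis .
  qed
  also have "(1 + (p - 1) * t^2) powr (p / 2) \<le> 1 + (p / 2) * ((p - 1) * t^2)"
    using p by (intro bernoulli_powr) auto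
  finally have L: "(a^2 + (p - 1) * b^2) powr (p / 2) \<le> \<bar>a\<bar> powr p * (1 + (p / 2) * ((p - 1) * t^2))"
    by (simp add: mult_left_mono)
  have "2 + p * (p - 1) * t^2 \<le> (1 + t) powr p + (1 - t) powr p"
    using hfun_nonneg[OF p t0 t1] .
  then have "\<bar>a\<bar> powr p * (1 + (p / 2) * ((p - 1) * t^2)) \<le> \<bar>a\<bar> powr p * (((1 + t) powr p + (1 - t) powr p) / 2)"
    by (intro mult_left_mono) (auto simp: field_simps)
  with L sum show ?thesis by simp
qed

lemma two_point:
  fixes p a b :: real
  assumes p: "1 < p" "p \<le> 2"
  shows "(a^2 + (p - 1) * b^2) powr (p / 2) \<le> (\<bar>a + b\<bar> powr p + \<bar>a - b\<bar> powr p) / 2"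
proof (cases "a \<noteq> 0 \<and> \<bar>b\<bar> \<le> \<bar>a\<bar>")
  case True then show ?thesis using two_point_le[OF p] by blast
next
  case False
  show ?thesis
  proof (cases "a = 0 \<and> b = 0")
    case True then show ?thesis by simp
  next
    case False2: False
    with False have ab: "\<bar>a\<bar> < \<bar>b\<bar>" by auto
    then have b0: "b \<noteq> 0" by auto
    have "(b^2 + (p - 1) * a^2) powr (p / 2) \<le> (\<bar>b + a\<bar> powr p + \<bar>b - a\<bar> powr p) / 2"
      using two_point_le[OF p b0] ab by simp
    also have "\<dots> = (\<bar>a + b\<bar> powr p + \<bar>a - b\<bar> powr p) / 2"
      by (simp add: abs_minus_commute add.commute)
    finally have 1: "(b^2 + (p - 1) * a^2) powr (p / 2) \<le> (\<bar>a + b\<bar> powr p + \<bar>a - b\<bar> powr p) / 2" .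
    have "a^2 \<le> b^2" using ab abs_le_square_iff[of a b] by simp
    then have "a^2 + (p - 1) * b^2 \<le> b^2 + (p - 1) * a^2"
    proof -
      have "0 \<le> (2 - p) * (b^2 - a^2)" using p \<open>a^2 \<le> b^2\<close> by auto
      then show ?thesis by (simp add: algebra_simps)
    qed
    then have "(a^2 + (p - 1) * b^2) powr (p / 2) \<le> (b^2 + (p - 1) * a^2) powr (p / 2)"
      using p by (intro powr_mono2) auto
    with 1 show ?thesis by linarith
  qed
qed

definition Ep :: "'a measure \<Rightarrow> real \<Rightarrow> ('a \<Rightarrow> real) \<Rightarrow> real" where
  "Ep M p g = (\<integral>x. \<bar>g x\<bar> powr p \<partial>M)"

definition nsq :: "'a measure \<Rightarrow> real \<Rightarrow> ('a \<Rightarrow> real) \<Rightarrow> real" where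
  "nsq M p g = Ep M p g powr (2 / p)"

definition inLp :: "'a measure \<Rightarrow> real \<Rightarrow> ('a \<Rightarrow> real) \<Rightarrow> bool" where
  "inLp M p g \<longleftrightarrow> g \<in> borel_measurable M \<and> integrable M (\<lambda>x. \<bar>g x\<bar> powr p)"

lemma Ep_nonneg: "0 \<le> Ep M p g"
  unfolding Ep_def by (intro integral_nonneg_AE) auto

lemma nsq_nonneg: "0 \<le> nsq M p g"
  unfolding nsq_def by simp

lemma Ep_cmult:
  assumes "0 < p"
  shows "Ep M p (\<lambda>x. c * g x) = \<bar>c\<bar> powr p * Ep M p g"
  unfolding Ep_def by (simp add: abs_mult powr_mult)

lemma nsq_cmult:
  assumes "0 < p"
  shows "nsq M p (\<lambda>x. c * g x) = c^2 * nsq M p g"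
proof -
  have "nsq M p (\<lambda>x. c * g x) = (\<bar>c\<bar> powr p) powr (2 / p) * nsq M p g"
    unfolding nsq_def Ep_cmult[OF assms] using Ep_nonneg[of M p g]
    by (simp add: powr_mult)
  also have "(\<bar>c\<bar> powr p) powr (2 / p) = c^2"
    using assms by (simp add: powr_powr)
  finally show ?thesis .
qed

lemma inLp_cmult:
  assumes "inLp M p g"
  shows "inLp M p (\<lambda>x. c * g x)"
proof -
  have "integrable M (\<lambda>x. \<bar>c\<bar> powr p * \<bar>g x\<bar> powr p)"
    using assms unfolding inLp_def by auto
  moreover have "g \<in> borel_measurable M" using assms unfolding inLp_def by auto
  then have "(\<lambda>x. c * g x) \<in> borel_measurable M" by measurable
  ultimately show ?thesis unfolding inLp_def by (simp add: abs_mult powr_mult)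
qed

lemma powr_add_bound:
  fixes a b p :: real
  assumes "0 \<le> p"
  shows "\<bar>a + b\<bar> powr p \<le> 2 powr p * (\<bar>a\<bar> powr p + \<bar>b\<bar> powr p)"
proof -
  define m where "m = max \<bar>a\<bar> \<bar>b\<bar>"
  have "\<bar>a + b\<bar> \<le> 2 * m" unfolding m_def by auto
  then have "\<bar>a + b\<bar> powr p \<le> (2 * m) powr p" using assms by (intro powr_mono2) auto
  also have "\<dots> = 2 powr p * m powr p" unfolding m_def by (simp add: powr_mult)
  also have "m powr p \<le> \<bar>a\<bar> powr p + \<bar>b\<bar> powr p" unfolding m_def by (auto simp: max_def)
  finally show ?thesis by simp
qed

lemma inLp_add:
  assumes "0 \<le> p" "inLp M p g" "inLp M p h"
  shows "inLp M p (\<lambda>x. g x + h x)"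
proof -
  have [measurable]: "g \<in> borel_measurable M" "h \<in> borel_measurable M"
    using assms unfolding inLp_def by auto
  have "integrable M (\<lambda>x. 2 powr p * (\<bar>g x\<bar> powr p + \<bar>h x\<bar> powr p))"
    using assms unfolding inLp_def by auto
  then have "integrable M (\<lambda>x. \<bar>g x + h x\<bar> powr p)"
    by (rule Bochner_Integration.integrable_bound) (use powr_add_bound[OF assms(1)] in auto)
  then show ?thesis unfolding inLp_def by auto
qed

lemma inLp_diff:
  assumes "0 \<le> p" "inLp M p g" "inLp M p h"
  shows "inLp M p (\<lambda>x. g x - h x)"
  using inLp_add[OF assms(1,2) inLp_cmult[OF assms(3), of "-1"]] by simp

lemma inLp_const0: "inLp M p (\<lambda>x. 0)"
  unfolding inLp_def by simp

lemma inLp_integrable: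
  assumes "finite_measure M" "1 \<le> p" "inLp M p g"
  shows "integrable M g"
proof -
  interpret finite_measure M by fact
  have [measurable]: "g \<in> borel_measurable M" using assms unfolding inLp_def by auto
  have "integrable M (\<lambda>x. 1 + \<bar>g x\<bar> powr p)"
    using assms unfolding inLp_def by auto
  then show ?thesis
  proof (rule Bochner_Integration.integrable_bound)
    show "AE x in M. norm (g x) \<le> norm (1 + \<bar>g x\<bar> powr p)"
    proof (intro AE_I2)
      fix x
      show "norm (g x) \<le> norm (1 + \<bar>g x\<bar> powr p)"
      proof (cases "\<bar>g x\<bar> \<le> 1")
        case True
        have h0: "0 \<le> \<bar>g x\<bar> powr p" by simp
        have "norm (1 + \<bar>g x\<bar> powr p) = 1 + \<bar>g x\<bar> powr p" using h0 by simp
        moreover have "norm (g x) = \<bar>g x\<bar>" by simp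
        ultimately show ?thesis using True h0 by linarith
      next
        case False
        then have "\<bar>g x\<bar> powr 1 \<le> \<bar>g x\<bar> powr p" using assms by (intro powr_mono) auto
        have h0: "0 \<le> \<bar>g x\<bar> powr p" by simp
        have "norm (1 + \<bar>g x\<bar> powr p) = 1 + \<bar>g x\<bar> powr p" using h0 by simp
        moreover have "norm (g x) = \<bar>g x\<bar>" by simp
        moreover have "\<bar>g x\<bar> powr 1 = \<bar>g x\<bar>" by simp
        ultimately show ?thesis using False h0 \<open>\<bar>g x\<bar> powr 1 \<le> \<bar>g x\<bar> powr p\<close> by linarith
      qed
    qed
  qed auto
qed

lemma Ep_cong_AE:
  assumes "g \<in> borel_measurable M" "h \<in> borel_measurable M" "AE x in M. g x = h x"
  shows "Ep M p g = Ep M p h"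
  unfolding Ep_def using assms by (intro integral_cong_AE) auto

lemma nsq_cong_AE:
  assumes "g \<in> borel_measurable M" "h \<in> borel_measurable M" "AE x in M. g x = h x"
  shows "nsq M p g = nsq M p h"
  unfolding nsq_def using Ep_cong_AE[OF assms] by simp

lemma convex_abs_powr:
  fixes p :: real
  assumes "1 \<le> p"
  shows "convex_on UNIV (\<lambda>t::real. \<bar>t\<bar> powr p)"
proof (rule convex_onI)
  fix t x y :: real
  assume t: "0 < t" "t < 1"
  have "\<bar>(1 - t) * x + t * y\<bar> \<le> \<bar>(1 - t) * x\<bar> + \<bar>t * y\<bar>" by (rule abs_triangle_ineq)
  also have "\<dots> = (1 - t) * \<bar>x\<bar> + t * \<bar>y\<bar>" using t by (simp add: abs_mult)
  also have "\<dots> = (1 - t) * (\<bar>x\<bar> powr p) powr (1 / p) + t * (\<bar>y\<bar> powr p) powr (1 / p)"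
    using assms by (simp add: powr_powr)
  also have "\<dots> \<le> ((1 - t) * \<bar>x\<bar> powr p + t * \<bar>y\<bar> powr p) powr (1 / p)"
    using assms t by (intro concave_powr2) auto
  finally have 1: "\<bar>(1 - t) * x + t * y\<bar> \<le> ((1 - t) * \<bar>x\<bar> powr p + t * \<bar>y\<bar> powr p) powr (1 / p)" .
  have "\<bar>(1 - t) * x + t * y\<bar> powr p \<le> (((1 - t) * \<bar>x\<bar> powr p + t * \<bar>y\<bar> powr p) powr (1 / p)) powr p"
    using assms by (intro powr_mono2[OF _ _ 1]) auto
  also have "\<dots> = (1 - t) * \<bar>x\<bar> powr p + t * \<bar>y\<bar> powr p"
    using assms t by (simp add: powr_powr)
  finally show "\<bar>(1 - t) *\<^sub>R x + t *\<^sub>R y\<bar> powr p \<le> (1 - t) * \<bar>x\<bar> powr p + t * \<bar>y\<bar> powr p"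
    by simp
qed auto

lemma cond_exp_Lp:
  assumes sf: "sigma_finite_subalgebra M F" and fm: "finite_measure M" and p: "1 \<le> p" and g: "inLp M p g"
  shows "inLp M p (real_cond_exp M F g)" "Ep M p (real_cond_exp M F g) \<le> Ep M p g"
proof -
  have [measurable]: "g \<in> borel_measurable M" using g unfolding inLp_def by auto
  have gi: "integrable M g" using inLp_integrable[OF fm p g] .
  have qi: "integrable M (\<lambda>x. \<bar>g x\<bar> powr p)" using g unfolding inLp_def by auto
  have cv: "convex_on UNIV (\<lambda>t::real. \<bar>t\<bar> powr p)" using convex_abs_powr[OF p] .
  have qm: "(\<lambda>t::real. \<bar>t\<bar> powr p) \<in> borel_measurable borel" by measurable
  have int: "integrable M (\<lambda>x. \<bar>real_cond_exp M F g x\<bar> powr p)"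
    using sigma_finite_subalgebra.integrable_convex_cond_exp[OF sf gi _ _ qi cv qm, of 0 0] by auto
  show "inLp M p (real_cond_exp M F g)" unfolding inLp_def using int by auto
  have ae: "AE x in M. \<bar>real_cond_exp M F g x\<bar> powr p \<le> real_cond_exp M F (\<lambda>x. \<bar>g x\<bar> powr p) x"
    using sigma_finite_subalgebra.real_cond_exp_jensens_inequality(2)[OF sf gi _ _ qi cv qm, of 0 0] by auto
  have "Ep M p (real_cond_exp M F g) \<le> (\<integral>x. real_cond_exp M F (\<lambda>x. \<bar>g x\<bar> powr p) x \<partial>M)"
    unfolding Ep_def
    by (intro integral_mono_AE int ae sigma_finite_subalgebra.real_cond_exp_int(1)[OF sf qi])
  also have "\<dots> = Ep M p g"
    unfolding Ep_def using sigma_finite_subalgebra.real_cond_exp_int(2)[OF sf qi] .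
  finally show "Ep M p (real_cond_exp M F g) \<le> Ep M p g" .
qed

lemma pw_rev_mink:
  fixes r a b U V :: real
  assumes r: "0 < r" "r \<le> 1" and ab: "0 \<le> a" "0 \<le> b" "a + b = 1" and UV: "0 \<le> U" "0 \<le> V"
  shows "a powr (1 - r) * U powr r + b powr (1 - r) * V powr r \<le> (U + V) powr r"
proof (cases "U + V = 0")
  case True
  then have "U = 0" "V = 0" using UV by auto
  then show ?thesis by simp
next
  case False
  define W where "W = U + V"
  have W: "0 < W" using False UV unfolding W_def by auto
  have 1: "a powr (1 - r) * (U / W) powr r \<le> (1 - r) * a + r * (U / W)"
    using young0[of "1 - r" r a "U / W"] r ab UV W by auto
  have 2: "b powr (1 - r) * (V / W) powr r \<le> (1 - r) * b + r * (V / W)"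
    using young0[of "1 - r" r b "V / W"] r ab UV W by auto
  have "(a powr (1 - r) * U powr r + b powr (1 - r) * V powr r) / W powr r
      = a powr (1 - r) * (U / W) powr r + b powr (1 - r) * (V / W) powr r"
    using UV W by (simp add: powr_divide add_divide_distrib)
  also have "\<dots> \<le> (1 - r) * a + r * (U / W) + ((1 - r) * b + r * (V / W))"
    using 1 2 by linarith
  also have "\<dots> = (1 - r) * (a + b) + r * ((U + V) / W)"
    by (simp add: algebra_simps add_divide_distrib)
  also have "\<dots> = 1" using ab W unfolding W_def by simp
  finally show ?thesis using W unfolding W_def[symmetric] by (simp add: divide_le_eq)
qed

lemma powr_frac_aux:
  fixes A S r :: real
  assumes "0 \<le> A" "0 < S"
  shows "(A / S) powr (1 - r) * A powr r = A / S powr (1 - r)"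
proof (cases "A = 0")
  case True then show ?thesis by simp
next
  case False
  then have "0 < A" using assms by auto
  then have "A powr (1 - r) * A powr r = A" by (simp add: powr_add[symmetric])
  then show ?thesis using assms \<open>0 < A\<close> by (simp add: powr_divide)
qed

lemma rev_mink:
  fixes r :: real and U V :: "'a \<Rightarrow> real"
  assumes r: "0 < r" "r \<le> 1" and UV: "\<And>x. 0 \<le> U x" "\<And>x. 0 \<le> V x"
    and [measurable]: "U \<in> borel_measurable M" "V \<in> borel_measurable M"
    and iU: "integrable M (\<lambda>x. U x powr r)" and iV: "integrable M (\<lambda>x. V x powr r)"
    and iW: "integrable M (\<lambda>x. (U x + V x) powr r)"
  shows "((\<integral>x. U x powr r \<partial>M) powr (1 / r) + (\<integral>x. V x powr r \<partial>M) powr (1 / r)) powr r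
     \<le> (\<integral>x. (U x + V x) powr r \<partial>M)"
proof -
  define \<alpha> where "\<alpha> = (\<integral>x. U x powr r \<partial>M)"
  define \<beta> where "\<beta> = (\<integral>x. V x powr r \<partial>M)"
  define A where "A = \<alpha> powr (1 / r)"
  define B where "B = \<beta> powr (1 / r)"
  define S where "S = A + B"
  have \<alpha>0: "0 \<le> \<alpha>" unfolding \<alpha>_def by (intro integral_nonneg_AE) auto
  have \<beta>0: "0 \<le> \<beta>" unfolding \<beta>_def by (intro integral_nonneg_AE) auto
  have A0: "0 \<le> A" and B0: "0 \<le> B" unfolding A_def B_def by auto
  have Ar: "A powr r = \<alpha>" unfolding A_def using \<alpha>0 r by (simp add: powr_powr)
  have Br: "B powr r = \<beta>" unfolding B_def using \<beta>0 r by (simp add: powr_powr)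
  have W0: "0 \<le> (\<integral>x. (U x + V x) powr r \<partial>M)" by (intro integral_nonneg_AE) auto
  show ?thesis
  proof (cases "S = 0")
    case True
    then show ?thesis using W0 unfolding \<alpha>_def[symmetric] \<beta>_def[symmetric] A_def[symmetric] B_def[symmetric] S_def[symmetric]
      by simp
  next
    case False
    then have S0: "0 < S" using A0 B0 unfolding S_def by auto
    define a where "a = A / S"
    define b where "b = B / S"
    have ab: "0 \<le> a" "0 \<le> b" "a + b = 1" unfolding a_def b_def S_def using A0 B0 S0 S_def
      by (auto simp: add_divide_distrib[symmetric])
    have "(\<integral>x. a powr (1 - r) * U x powr r + b powr (1 - r) * V x powr r \<partial>M)
        \<le> (\<integral>x. (U x + V x) powr r \<partial>M)"
      using iU iV iW pw_rev_mink[OF r ab] UV by (intro integral_mono) auto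
    moreover have "(\<integral>x. a powr (1 - r) * U x powr r + b powr (1 - r) * V x powr r \<partial>M)
        = a powr (1 - r) * \<alpha> + b powr (1 - r) * \<beta>"
      unfolding \<alpha>_def \<beta>_def using iU iV by simp
    moreover have "a powr (1 - r) * \<alpha> + b powr (1 - r) * \<beta> = S powr r"
    proof -
      have "a powr (1 - r) * \<alpha> = A / S powr (1 - r)"
        unfolding a_def Ar[symmetric] using powr_frac_aux[OF A0 S0] .
      moreover have "b powr (1 - r) * \<beta> = B / S powr (1 - r)"
        unfolding b_def Br[symmetric] using powr_frac_aux[OF B0 S0] .
      moreover have "A / S powr (1 - r) + B / S powr (1 - r) = S powr r"
      proof -
        have "S powr r * S powr (1 - r) = S" using S0 by (simp add: powr_add[symmetric])
        then show ?thesis unfolding S_def using S0 S_def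
          by (simp add: add_divide_distrib[symmetric] divide_eq_eq)
      qed
      ultimately show ?thesis by simp
    qed
    ultimately show ?thesis unfolding \<alpha>_def[symmetric] \<beta>_def[symmetric] A_def[symmetric] B_def[symmetric] S_def[symmetric]
      by simp
  qed
qed


lemma sq_powr_half:
  fixes a p :: real
  shows "(a^2) powr (p / 2) = \<bar>a\<bar> powr p"
proof -
  have "(a^2) powr (p / 2) = (\<bar>a\<bar> powr 2) powr (p / 2)" by simp
  also have "\<dots> = \<bar>a\<bar> powr p" by (subst powr_powr) simp
  finally show ?thesis .
qed

lemma powr_le_cancel_base:
  fixes X Y r :: real
  assumes "0 < r" "0 \<le> X" "0 \<le> Y" "X powr r \<le> Y powr r"
  shows "X \<le> Y"
proof (rule ccontr)
  assume "\<not> X \<le> Y"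
  then have "Y powr r < X powr r" using assms by (intro powr_less_mono2) auto
  then show False using assms by linarith
qed

lemma bcl:
  assumes p: "1 < p" "p \<le> 2" and z: "inLp M p z" and w: "inLp M p w"
  shows "nsq M p z + (p - 1) * nsq M p w \<le> (nsq M p (\<lambda>x. z x + w x) + nsq M p (\<lambda>x. z x - w x)) / 2"
proof -
  define r where "r = p / 2"
  have r: "0 < r" "r \<le> 1" unfolding r_def using p by auto
  have [measurable]: "z \<in> borel_measurable M" "w \<in> borel_measurable M"
    using z w unfolding inLp_def by auto
  have iz: "integrable M (\<lambda>x. \<bar>z x\<bar> powr p)" and iw: "integrable M (\<lambda>x. \<bar>w x\<bar> powr p)"
    using z w unfolding inLp_def by auto
  have ipl: "integrable M (\<lambda>x. \<bar>z x + w x\<bar> powr p)"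
    using inLp_add[of p M z w] z w p unfolding inLp_def by auto
  have imi: "integrable M (\<lambda>x. \<bar>z x - w x\<bar> powr p)"
    using inLp_diff[of p M z w] z w p unfolding inLp_def by auto
  define U where "U = (\<lambda>x. (z x)^2)"
  define V where "V = (\<lambda>x. (p - 1) * (w x)^2)"
  have [measurable]: "U \<in> borel_measurable M" "V \<in> borel_measurable M" unfolding U_def V_def by auto
  have U0: "\<And>x. 0 \<le> U x" and V0: "\<And>x. 0 \<le> V x" unfolding U_def V_def using p by auto
  have Ur: "\<And>x. U x powr r = \<bar>z x\<bar> powr p" unfolding U_def r_def by (rule sq_powr_half)
  have Vr: "\<And>x. V x powr r = (p - 1) powr r * \<bar>w x\<bar> powr p"
    unfolding V_def r_def using p by (simp add: powr_mult sq_powr_half)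
  have Wr: "\<And>x. (U x + V x) powr r \<le> (\<bar>z x + w x\<bar> powr p + \<bar>z x - w x\<bar> powr p) / 2"
    unfolding U_def V_def r_def using two_point[OF p] by auto
  have iU: "integrable M (\<lambda>x. U x powr r)" unfolding Ur using iz .
  have iV: "integrable M (\<lambda>x. V x powr r)" unfolding Vr using iw by simp
  have iW: "integrable M (\<lambda>x. (U x + V x) powr r)"
  proof (rule Bochner_Integration.integrable_bound)
    show "integrable M (\<lambda>x. (\<bar>z x + w x\<bar> powr p + \<bar>z x - w x\<bar> powr p) / 2)"
      using ipl imi by auto
    show "AE x in M. norm ((U x + V x) powr r) \<le> norm ((\<bar>z x + w x\<bar> powr p + \<bar>z x - w x\<bar> powr p) / 2)"
    proof (intro AE_I2)
      fix x
      have "0 \<le> (U x + V x) powr r" by simp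
      then show "norm ((U x + V x) powr r) \<le> norm ((\<bar>z x + w x\<bar> powr p + \<bar>z x - w x\<bar> powr p) / 2)"
        using Wr[of x] by simp
    qed
  qed auto
  have RM: "((\<integral>x. U x powr r \<partial>M) powr (1 / r) + (\<integral>x. V x powr r \<partial>M) powr (1 / r)) powr r
     \<le> (\<integral>x. (U x + V x) powr r \<partial>M)"
    by (rule rev_mink[OF r U0 V0 _ _ iU iV iW]) auto
  have e1: "(\<integral>x. U x powr r \<partial>M) powr (1 / r) = nsq M p z"
  proof -
    have "1 / r = 2 / p" unfolding r_def by simp
    then show ?thesis by (simp add: Ur nsq_def Ep_def)
  qed
  have e2: "(\<integral>x. V x powr r \<partial>M) powr (1 / r) = (p - 1) * nsq M p w"
  proof -
    have "(\<integral>x. V x powr r \<partial>M) = (p - 1) powr r * Ep M p w"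
      by (simp add: Vr Ep_def)
    then have "(\<integral>x. V x powr r \<partial>M) powr (1 / r) = ((p - 1) powr r) powr (1 / r) * nsq M p w"
      unfolding nsq_def r_def using p Ep_nonneg[of M p w] by (simp add: powr_mult)
    also have "((p - 1) powr r) powr (1 / r) = p - 1" using p r by (simp add: powr_powr)
    finally show ?thesis .
  qed
  have I: "(\<integral>x. (U x + V x) powr r \<partial>M) \<le> (Ep M p (\<lambda>x. z x + w x) + Ep M p (\<lambda>x. z x - w x)) / 2"
  proof -
    have "(\<integral>x. (U x + V x) powr r \<partial>M) \<le> (\<integral>x. (\<bar>z x + w x\<bar> powr p + \<bar>z x - w x\<bar> powr p) / 2 \<partial>M)"
      using iW ipl imi Wr by (intro integral_mono) auto
    also have "\<dots> = (Ep M p (\<lambda>x. z x + w x) + Ep M p (\<lambda>x. z x - w x)) / 2"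
      unfolding Ep_def using ipl imi by simp
    finally show ?thesis .
  qed
  have PM: "(Ep M p (\<lambda>x. z x + w x) + Ep M p (\<lambda>x. z x - w x)) / 2
      \<le> ((nsq M p (\<lambda>x. z x + w x) + nsq M p (\<lambda>x. z x - w x)) / 2) powr r"
  proof -
    define A where "A = Ep M p (\<lambda>x. z x + w x) powr (1 / p)"
    define B where "B = Ep M p (\<lambda>x. z x - w x) powr (1 / p)"
    have A0: "0 \<le> A" "0 \<le> B" unfolding A_def B_def by auto
    have eA: "A powr p = Ep M p (\<lambda>x. z x + w x)" and eB: "B powr p = Ep M p (\<lambda>x. z x - w x)"
      unfolding A_def B_def using p Ep_nonneg[of M p "\<lambda>x. z x + w x"] Ep_nonneg[of M p "\<lambda>x. z x - w x"]
      by (simp_all add: powr_powr)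
    have sA: "A^2 = nsq M p (\<lambda>x. z x + w x)" and sB: "B^2 = nsq M p (\<lambda>x. z x - w x)"
    proof -
      have "A^2 = A powr 2" using A0 by simp
      also have "\<dots> = nsq M p (\<lambda>x. z x + w x)" unfolding A_def nsq_def by (simp add: powr_powr)
      finally show "A^2 = nsq M p (\<lambda>x. z x + w x)" .
      have "B^2 = B powr 2" using A0 by simp
      also have "\<dots> = nsq M p (\<lambda>x. z x - w x)" unfolding B_def nsq_def by (simp add: powr_powr)
      finally show "B^2 = nsq M p (\<lambda>x. z x - w x)" .
    qed
    have "(A powr p + B powr p) / 2 \<le> ((A^2 + B^2) / 2) powr (p / 2)" by (rule power_mean2[OF p A0])
    then show ?thesis unfolding r_def eA eB sA sB .
  qed
  have "(nsq M p z + (p - 1) * nsq M p w) powr r \<le> ((nsq M p (\<lambda>x. z x + w x) + nsq M p (\<lambda>x. z x - w x)) / 2) powr r"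
    using RM I PM unfolding e1 e2 by linarith
  then show ?thesis
  proof (rule powr_le_cancel_base[OF r(1), rotated 2])
    show "0 \<le> nsq M p z + (p - 1) * nsq M p w" using p nsq_nonneg[of M p z] nsq_nonneg[of M p w] by simp
    show "0 \<le> (nsq M p (\<lambda>x. z x + w x) + nsq M p (\<lambda>x. z x - w x)) / 2"
      using nsq_nonneg[of M p "\<lambda>x. z x + w x"] nsq_nonneg[of M p "\<lambda>x. z x - w x"] by simp
  qed
qed

lemma dyadic:
  assumes p: "1 < p" "p \<le> 2" and x: "inLp M p x" and y: "inLp M p y"
    and hyp: "\<And>t. 0 < t \<Longrightarrow> t \<le> 1 \<Longrightarrow> nsq M p x \<le> nsq M p (\<lambda>\<omega>. x \<omega> + t * y \<omega>)"
  shows "nsq M p x + (p - 1) * nsq M p y \<le> nsq M p (\<lambda>\<omega>. x \<omega> + y \<omega>)"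
proof -
  define G where "G = (\<lambda>t. nsq M p (\<lambda>\<omega>. x \<omega> + t * y \<omega>))"
  define Y where "Y = nsq M p y"
  define F where "F = (\<lambda>t. G t - (p - 1) * t^2 * Y)"
  have p0: "0 \<le> p" "0 < p" using p by auto
  have G0: "G 0 = nsq M p x" unfolding G_def by simp
  have G1: "G 1 = nsq M p (\<lambda>\<omega>. x \<omega> + y \<omega>)" unfolding G_def by simp
  have Y0: "0 \<le> Y" unfolding Y_def by (rule nsq_nonneg)
  have mid: "G h + (p - 1) * h^2 * Y \<le> (G (2 * h) + G 0) / 2" if "0 \<le> h" for h :: real
  proof -
    have z: "inLp M p (\<lambda>\<omega>. x \<omega> + h * y \<omega>)" by (intro inLp_add p0 x inLp_cmult y)
    have w: "inLp M p (\<lambda>\<omega>. h * y \<omega>)" by (intro inLp_cmult y)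
    have "nsq M p (\<lambda>\<omega>. x \<omega> + h * y \<omega>) + (p - 1) * nsq M p (\<lambda>\<omega>. h * y \<omega>)
      \<le> (nsq M p (\<lambda>\<omega>. (x \<omega> + h * y \<omega>) + h * y \<omega>) + nsq M p (\<lambda>\<omega>. (x \<omega> + h * y \<omega>) - h * y \<omega>)) / 2"
      by (rule bcl[OF p z w])
    moreover have "(\<lambda>\<omega>. (x \<omega> + h * y \<omega>) + h * y \<omega>) = (\<lambda>\<omega>. x \<omega> + (2 * h) * y \<omega>)"
      by (auto simp: algebra_simps)
    moreover have "(\<lambda>\<omega>. (x \<omega> + h * y \<omega>) - h * y \<omega>) = x" by auto
    moreover have "nsq M p (\<lambda>\<omega>. h * y \<omega>) = h^2 * Y" unfolding Y_def by (rule nsq_cmult[OF p0(2)])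
    ultimately show ?thesis unfolding G_def G0[unfolded G_def] by (simp add: algebra_simps)
  qed
  have step: "2^m * (F (1 / 2^m) - F 0) \<le> F 1 - F 0" for m :: nat
  proof (induction m)
    case 0 then show ?case by simp
  next
    case (Suc m)
    define h :: real where "h = 1 / 2^(Suc m)"
    have h0: "0 \<le> h" unfolding h_def by simp
    have h2: "2 * h = 1 / 2^m" unfolding h_def by simp
    have "F h - F 0 \<le> (F (2 * h) - F 0) / 2"
      using mid[OF h0] unfolding F_def by (simp add: power2_eq_square algebra_simps)
    then have "2 * (F h - F 0) \<le> F (1 / 2^m) - F 0" unfolding h2 by simp
    then have "2^m * (2 * (F h - F 0)) \<le> 2^m * (F (1 / 2^m) - F 0)"
      by (intro mult_left_mono) auto
    then have "2^(Suc m) * (F h - F 0) \<le> 2^m * (F (1 / 2^m) - F 0)"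
      by (simp add: mult.assoc)
    then show ?case using Suc.IH unfolding h_def by linarith
  qed
  have lower: "- ((p - 1) * Y / 2^m) \<le> F 1 - F 0" for m :: nat
  proof -
    have t: "0 < (1::real) / 2^m" "(1::real) / 2^m \<le> 1" by auto
    have "G 0 \<le> G (1 / 2^m)" unfolding G0 unfolding G_def using hyp[OF t] .
    then have "- (p - 1) * (1 / 2^m)^2 * Y \<le> F (1 / 2^m) - F 0" unfolding F_def by (simp add: algebra_simps)
    then have "2^m * (- (p - 1) * (1 / 2^m)^2 * Y) \<le> 2^m * (F (1 / 2^m) - F 0)"
      by (intro mult_left_mono) auto
    moreover have "2^m * (- (p - 1) * (1 / 2^m)^2 * Y) = - ((p - 1) * Y / 2^m)"
      by (simp add: power2_eq_square field_simps)
    ultimately show ?thesis using step[of m] by linarith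
  qed
  have "F 0 \<le> F 1"
  proof (rule ccontr)
    assume "\<not> F 0 \<le> F 1"
    then have d: "0 < F 0 - F 1" by simp
    obtain m :: nat where m: "(p - 1) * Y / (F 0 - F 1) < 2^m"
      using real_arch_pow[of 2 "(p - 1) * Y / (F 0 - F 1)"] by auto
    then have "(p - 1) * Y < 2^m * (F 0 - F 1)" using d by (simp add: divide_less_eq mult.commute)
    then have "(p - 1) * Y / 2^m < F 0 - F 1" by (simp add: divide_less_eq mult.commute)
    with lower[of m] show False by linarith
  qed
  then show ?thesis unfolding F_def G0 G1 Y_def by simp
qed

lemma (in prob_space) indep_set_mono':
  assumes "indep_set A B" "A' \<subseteq> A" "B' \<subseteq> B"
  shows "indep_set A' B'"
  unfolding indep_set_def
proof (rule indep_sets_mono_sets[OF assms(1)[unfolded indep_set_def]])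
  fix i :: bool
  show "(case i of True \<Rightarrow> A' | False \<Rightarrow> B') \<subseteq> (case i of True \<Rightarrow> A | False \<Rightarrow> B)"
    using assms by (cases i) auto
qed

lemma sf_subalg:
  assumes "prob_space M" "subalgebra M F"
  shows "sigma_finite_subalgebra M F"
proof -
  have fm: "finite_measure M" using assms(1) unfolding prob_space_def by simp
  have "finite_measure_subalgebra M F"
    unfolding finite_measure_subalgebra_def finite_measure_subalgebra_axioms_def
    using fm assms(2) by simp
  then show ?thesis by (rule finite_measure_subalgebra_is_sigma_finite)
qed

lemma subalgebra_trans:
  assumes "subalgebra M G" "subalgebra G F"
  shows "subalgebra M F"
  using assms unfolding subalgebra_def by auto

lemma sigma_sets_vimage_sub:
  assumes sub: "subalgebra M H" and Z: "Z \<in> borel_measurable H"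
  shows "sigma_sets (space M) {Z -` B \<inter> space M | B. B \<in> sets borel} \<subseteq> sets H"
proof -
  have sp: "space H = space M" using sub unfolding subalgebra_def by auto
  have "{Z -` B \<inter> space M | B. B \<in> sets borel} \<subseteq> sets H"
    using measurable_sets[OF Z] sp by auto
  then have "sigma_sets (space H) {Z -` B \<inter> space M | B. B \<in> sets borel} \<subseteq> sets H"
    by (intro sets.sigma_sets_subset') auto
  then show ?thesis using sp by simp
qed

lemma indep_cond_exp_const:
  assumes ps: "prob_space M" and sH: "subalgebra M H" and sG: "subalgebra M G"
    and ind: "prob_space.indep_set M (sets H) (sets G)"
    and Zi: "integrable M Z" and Zm: "Z \<in> borel_measurable H"
  shows "AE x in M. real_cond_exp M G Z x = (\<integral>x. Z x \<partial>M)"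
proof -
  interpret prob_space M by fact
  have sf: "sigma_finite_subalgebra M G" by (rule sf_subalg[OF ps sG])
  have ZM [measurable]: "Z \<in> borel_measurable M" using Zi by auto
  show ?thesis
  proof (rule sigma_finite_subalgebra.real_cond_exp_charact[OF sf])
    fix A assume A: "A \<in> sets G"
    have AM [measurable]: "A \<in> sets M" using A sG unfolding subalgebra_def by auto
    have iA: "(indicator A :: 'a \<Rightarrow> real) \<in> borel_measurable G" using A by auto
    have "indep_var borel Z borel (indicator A :: 'a \<Rightarrow> real)"
      unfolding indep_var_eq
    proof (intro conjI)
      show "random_variable borel Z" using ZM by simp
      show "random_variable borel (indicator A :: 'a \<Rightarrow> real)" using AM by simp
      show "indep_set (sigma_sets (space M) {Z -` B \<inter> space M | B. B \<in> sets borel})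
         (sigma_sets (space M) {(indicator A :: 'a \<Rightarrow> real) -` B \<inter> space M | B. B \<in> sets borel})"
        by (rule indep_set_mono'[OF ind sigma_sets_vimage_sub[OF sH Zm] sigma_sets_vimage_sub[OF sG iA]])
    qed
    moreover have "integrable M (indicator A :: 'a \<Rightarrow> real)"
    proof (rule integrable_real_indicator[OF AM])
      show "emeasure M A < \<infinity>" using emeasure_finite[of A] by (simp add: less_top[symmetric])
    qed
    ultimately have "(\<integral>x. Z x * indicator A x \<partial>M) = (\<integral>x. Z x \<partial>M) * (\<integral>x. indicator A x \<partial>M)"
      using Zi by (intro indep_var_lebesgue_integral) auto
    also have "\<dots> = (\<integral>x. Z x \<partial>M) * measure M A" using AM by simp
    finally have 1: "(\<integral>x. Z x * indicator A x \<partial>M) = (\<integral>x. Z x \<partial>M) * measure M A" .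
    show "(\<integral>x\<in>A. Z x \<partial>M) = (\<integral>x\<in>A. (\<integral>x. Z x \<partial>M) \<partial>M)"
      unfolding set_lebesgue_integral_def using 1 AM by (simp add: mult.commute)
  qed (use Zi in auto)
qed

lemma arr_sigma_subalg:
  assumes "\<forall>s\<in>dsubsets d J. X s \<in> measurable M N"
  shows "subalgebra M (arr_sigma M N X d J)"
proof -
  let ?G = "\<Union>s\<in>dsubsets d J. {X s -` A \<inter> space M | A. A \<in> sets N}"
  have G: "?G \<subseteq> Pow (space M)" by auto
  have GM: "?G \<subseteq> sets M" using assms measurable_sets by blast
  have "sigma_sets (space M) ?G \<subseteq> sets M" by (rule sets.sigma_sets_subset'[OF GM]) simp
  then show ?thesis unfolding subalgebra_def arr_sigma_def using G by simp
qed

lemma arr_sigma_mono: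
  assumes "J \<subseteq> K"
  shows "subalgebra (arr_sigma M N X d K) (arr_sigma M N X d J)"
proof -
  let ?G = "\<lambda>J. \<Union>s\<in>dsubsets d J. {X s -` A \<inter> space M | A. A \<in> sets N}"
  have G: "\<And>J. ?G J \<subseteq> Pow (space M)" by auto
  have "dsubsets d J \<subseteq> dsubsets d K" using assms unfolding dsubsets_def by auto
  then have "?G J \<subseteq> ?G K" by auto
  then show ?thesis unfolding subalgebra_def arr_sigma_def
    using G by (auto intro!: sigma_sets_mono')
qed

theorem theorem7p1:
  fixes M :: "'a measure" and N :: "'b measure" and X :: "nat set \<Rightarrow> 'a \<Rightarrow> 'b"
    and f :: "(nat set \<Rightarrow> 'b) \<Rightarrow> real" and p \<epsilon> :: real and n d :: nat
  assumes "prob_space M"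
    and "1 < p" and "p \<le> 2" and "0 < \<epsilon>" and "\<epsilon> \<le> 1"
    and "0 < n" and "0 < d" and "real n \<ge> 2 * real d / cconst \<epsilon> p"
    and "\<forall>s\<in>dsubsets d {1..n}. X s \<in> measurable M N"
    and "dissociated M N X d n"
    and "f \<in> borel_measurable (PiM (dsubsets d {1..n}) (\<lambda>_. N))"
    and "integrable M (\<lambda>\<omega>. \<bar>f (arr_vec d {1..n} X \<omega>)\<bar> powr p)"
    and "(\<integral>\<omega>. f (arr_vec d {1..n} X \<omega>) \<partial>M) = 0"
    and "(\<integral>\<omega>. \<bar>f (arr_vec d {1..n} X \<omega>)\<bar> powr p \<partial>M) powr (1 / p) = 1"
  shows "\<exists>a b. 1 \<le> a \<and> b \<le> n \<and> real (card {a..b}) \<ge> cconst \<epsilon> p * real n \<and>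
           (\<forall>J. J \<subseteq> {a..b} \<and> card J \<ge> d \<longrightarrow>
              measure M {\<omega> \<in> space M.
                 \<bar>real_cond_exp M (arr_sigma M N X d J) (\<lambda>\<omega>. f (arr_vec d {1..n} X \<omega>)) \<omega>\<bar> \<le> \<epsilon>}
              \<ge> 1 - \<epsilon>)"
proof -
  have ps: "prob_space M" by fact
  interpret P: prob_space M by fact
  have fm: "finite_measure M" using ps unfolding prob_space_def by simp
  have p: "1 < p" "p \<le> 2" by fact+
  have p1: "1 \<le> p" "0 < p" "0 \<le> p" using assms(2) by auto
  define E where "E = \<epsilon> powr (2 * (p + 1) / p)"
  define c where "c = cconst \<epsilon> p"
  have c_E: "c = 1 / 4 * E * (p - 1)" unfolding c_def E_def cconst_def by simp
  have Epos: "0 < E" unfolding E_def using assms(4) by simp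
  have Ele1: "E \<le> 1" unfolding E_def using assms(4,5) p1 by (intro powr_le1) auto
  have c0: "0 < c" unfolding c_E using Epos assms(2) by simp
  have c14: "c \<le> 1 / 4"
  proof -
    have "E * (p - 1) \<le> 1" using Ele1 Epos assms(2,3) by (intro mult_le_one) auto
    then show ?thesis unfolding c_E by simp
  qed
  have cn: "2 * real d \<le> c * real n"
    using assms(8) c0 unfolding c_def[symmetric] by (simp add: pos_divide_le_eq mult.commute)
  define L where "L = nat \<lceil>c * real n\<rceil>"
  have cn0: "0 \<le> c * real n" using c0 by simp
  have realL: "real L = real_of_int \<lceil>c * real n\<rceil>" unfolding L_def using cn0 by simp
  have L1: "c * real n \<le> real L" unfolding realL using ceiling_correct[of "c * real n"] by linarith
  have L2: "real L < c * real n + 1" unfolding realL using ceiling_correct[of "c * real n"] by linarith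
  have dL: "d \<le> L" using cn L1 by simp
  have L0: "0 < L" using dL assms(7) by simp
  have cn4: "c * real n \<le> real n / 4"
  proof -
    have "c * real n \<le> 1 / 4 * real n" using c14 by (intro mult_right_mono) auto
    then show ?thesis by simp
  qed
  have n8: "8 \<le> real n"
  proof -
    have "2 \<le> c * real n" using cn assms(7) by simp
    then show ?thesis using cn4 by simp
  qed
  have "real L < real n" using L2 cn4 n8 by linarith
  then have Ln: "L \<le> n" by simp
  define k where "k = n div L"
  have k1: "1 \<le> k" unfolding k_def using Ln L0 div_greater_zero_iff[of n L] by simp
  have kL: "k * L \<le> n" unfolding k_def by simp
  have nk: "n < (k + 1) * L"
  proof -
    have "n = k * L + n mod L" unfolding k_def by simp
    moreover have "n mod L < L" using L0 by simp
    ultimately show ?thesis by (simp add: algebra_simps)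
  qed
  have k4c: "1 \<le> 4 * c * real k"
  proof (rule ccontr)
    assume "\<not> 1 \<le> 4 * c * real k"
    then have "c * real k < 1 / 4" by simp
    then have a: "c * (real k + 1) < 1 / 2" using c14 by (simp add: algebra_simps)
    define x where "x = c * real n"
    have x2: "2 \<le> x" unfolding x_def using cn assms(7) by simp
    have "real n < (real k + 1) * real L" using nk by (metis of_nat_1 of_nat_add of_nat_less_iff of_nat_mult)
    also have "\<dots> \<le> (real k + 1) * (x + 1)" unfolding x_def using L2 by (intro mult_left_mono) auto
    finally have "c * real n < c * ((real k + 1) * (x + 1))" using c0 by simp
    then have "x < c * (real k + 1) * (x + 1)" unfolding x_def by (simp add: mult.assoc)
    also have "\<dots> \<le> 1 / 2 * (x + 1)" using a x2 by (intro mult_right_mono) auto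
    finally show False using x2 by simp
  qed
  define Y where "Y = (\<lambda>\<omega>. f (arr_vec d {1..n} X \<omega>))"
  have av: "arr_vec d {1..n} X \<in> measurable M (PiM (dsubsets d {1..n}) (\<lambda>_. N))"
  proof -
    have "arr_vec d {1..n} X = (\<lambda>\<omega>. \<lambda>s\<in>dsubsets d {1..n}. X s \<omega>)"
      by (rule ext) (simp add: arr_vec_def)
    also have "\<dots> \<in> measurable M (PiM (dsubsets d {1..n}) (\<lambda>_. N))"
      by (rule measurable_restrict) (use assms(9) in auto)
    finally show ?thesis .
  qed
  have Ym [measurable]: "Y \<in> borel_measurable M" unfolding Y_def by (rule measurable_compose[OF av assms(11)])
  have YLp: "inLp M p Y" unfolding inLp_def using Ym assms(12) by (simp add: Y_def)
  have EY: "Ep M p Y = 1"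
  proof -
    have 1: "(Ep M p Y) powr (1 / p) = 1" using assms(14) unfolding Ep_def Y_def .
    have "Ep M p Y = ((Ep M p Y) powr (1 / p)) powr p" using Ep_nonneg[of M p Y] p1 by (simp add: powr_powr)
    then show ?thesis unfolding 1 by simp
  qed
  have nY: "nsq M p Y = 1" unfolding nsq_def EY by simp
  have Yi: "integrable M Y" by (rule inLp_integrable[OF fm p1(1) YLp])
  have Y0: "(\<integral>\<omega>. Y \<omega> \<partial>M) = 0" using assms(13) unfolding Y_def .
  define Fs where "Fs J = arr_sigma M N X d J" for J
  have subF: "subalgebra M (Fs J)" if "J \<subseteq> {1..n}" for J
  proof -
    have "dsubsets d J \<subseteq> dsubsets d {1..n}" using that unfolding dsubsets_def by auto
    then show ?thesis unfolding Fs_def using assms(9) by (intro arr_sigma_subalg) auto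
  qed
  have sfF: "sigma_finite_subalgebra M (Fs J)" if "J \<subseteq> {1..n}" for J
    using sf_subalg[OF ps subF[OF that]] .
  have monoF: "subalgebra (Fs K) (Fs J)" if "J \<subseteq> K" for J K
    unfolding Fs_def using that by (rule arr_sigma_mono)
  define Pk where "Pk i = {1..i * L}" for i :: nat
  define Bk where "Bk i = {i * L + 1..(i + 1) * L}" for i :: nat
  have PkS: "Pk i \<subseteq> {1..n}" if "i \<le> k" for i
  proof -
    have "i * L \<le> k * L" using that by simp
    then have "i * L \<le> n" using kL by linarith
    then show ?thesis unfolding Pk_def by auto
  qed
  have BkS: "Bk i \<subseteq> Pk (Suc i)" for i unfolding Bk_def Pk_def by auto
  have BkN: "Bk i \<subseteq> {1..n}" if "i < k" for i using BkS[of i] PkS[of "Suc i"] that by auto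
  define \<Phi> where "\<Phi> i = (if i = 0 then (\<lambda>_::'a. 0::real) else real_cond_exp M (Fs (Pk i)) Y)" for i
  define g where "g i = real_cond_exp M (Fs (Bk i)) Y" for i
  have \<Phi>Lp: "inLp M p (\<Phi> i)" if "i \<le> k" for i
    using cond_exp_Lp(1)[OF sfF[OF PkS[OF that]] fm p1(1) YLp] inLp_const0 unfolding \<Phi>_def by auto
  have \<Phi>int: "integrable M (\<Phi> i)" if "i \<le> k" for i
    by (rule inLp_integrable[OF fm p1(1) \<Phi>Lp[OF that]])
  have \<Phi>m [measurable]: "\<Phi> i \<in> borel_measurable M" for i
    unfolding \<Phi>_def by auto
  have \<Phi>mF: "\<Phi> i \<in> borel_measurable (Fs (Pk i))" for i
    unfolding \<Phi>_def by auto
  have nsq0: "nsq M p (\<lambda>_. 0) = 0" unfolding nsq_def Ep_def by simp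
  have \<Phi>nY: "nsq M p (\<Phi> i) \<le> 1" if "i \<le> k" for i
  proof (cases "i = 0")
    case True then show ?thesis unfolding \<Phi>_def using nsq0 by simp
  next
    case False
    have "Ep M p (\<Phi> i) \<le> 1"
      using cond_exp_Lp(2)[OF sfF[OF PkS[OF that]] fm p1(1) YLp] False EY unfolding \<Phi>_def by simp
    then have "Ep M p (\<Phi> i) powr (2 / p) \<le> 1 powr (2 / p)"
      using p1 Ep_nonneg[of M p "\<Phi> i"] by (intro powr_mono2) auto
    then show ?thesis unfolding nsq_def by simp
  qed
  have nsq_mono: "nsq M p u \<le> nsq M p v" if "Ep M p u \<le> Ep M p v" for u v
    unfolding nsq_def using that p1 Ep_nonneg[of M p u] by (intro powr_mono2) auto
  have K1: "nsq M p (\<Phi> i) + (p - 1) * nsq M p (\<lambda>\<omega>. \<Phi> (Suc i) \<omega> - \<Phi> i \<omega>) \<le> nsq M p (\<Phi> (Suc i))"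
    if i: "i < k" for i
  proof -
    have x: "inLp M p (\<Phi> i)" using \<Phi>Lp i by simp
    have y: "inLp M p (\<lambda>\<omega>. \<Phi> (Suc i) \<omega> - \<Phi> i \<omega>)"
      using inLp_diff[OF p1(3) \<Phi>Lp \<Phi>Lp] i by simp
    have hyp: "nsq M p (\<Phi> i) \<le> nsq M p (\<lambda>\<omega>. \<Phi> i \<omega> + t * (\<Phi> (Suc i) \<omega> - \<Phi> i \<omega>))"
      if t: "0 < t" "t \<le> 1" for t
    proof (cases "i = 0")
      case True
      then show ?thesis using nsq0 nsq_nonneg unfolding \<Phi>_def by simp
    next
      case False
      define H where "H = Fs (Pk i)"
      have sfH: "sigma_finite_subalgebra M H" unfolding H_def using sfF PkS i by simp
      define W where "W = (\<lambda>\<omega>. \<Phi> i \<omega> + t * (\<Phi> (Suc i) \<omega> - \<Phi> i \<omega>))"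
      have WLp: "inLp M p W" unfolding W_def by (intro inLp_add p1 x inLp_cmult y)
      have i1: "integrable M (\<Phi> i)" "integrable M (\<Phi> (Suc i))" using \<Phi>int i by auto
      have i2: "integrable M (\<lambda>\<omega>. \<Phi> (Suc i) \<omega> - \<Phi> i \<omega>)" using i1 by auto
      have i3: "integrable M (\<lambda>\<omega>. t * (\<Phi> (Suc i) \<omega> - \<Phi> i \<omega>))" using i2 by auto
      have a1: "AE x in M. real_cond_exp M H W x = real_cond_exp M H (\<Phi> i) x + real_cond_exp M H (\<lambda>\<omega>. t * (\<Phi> (Suc i) \<omega> - \<Phi> i \<omega>)) x"
        unfolding W_def by (rule sigma_finite_subalgebra.real_cond_exp_add[OF sfH i1(1) i3])
      have a2: "AE x in M. real_cond_exp M H (\<lambda>\<omega>. t * (\<Phi> (Suc i) \<omega> - \<Phi> i \<omega>)) x = t * real_cond_exp M H (\<lambda>\<omega>. \<Phi> (Suc i) \<omega> - \<Phi> i \<omega>) x"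
        by (rule sigma_finite_subalgebra.real_cond_exp_cmult[OF sfH i2])
      have a3: "AE x in M. real_cond_exp M H (\<lambda>\<omega>. \<Phi> (Suc i) \<omega> - \<Phi> i \<omega>) x = real_cond_exp M H (\<Phi> (Suc i)) x - real_cond_exp M H (\<Phi> i) x"
        by (rule sigma_finite_subalgebra.real_cond_exp_diff[OF sfH i1(2) i1(1)])
      have a4: "AE x in M. real_cond_exp M H (\<Phi> i) x = \<Phi> i x"
        by (rule sigma_finite_subalgebra.real_cond_exp_F_meas[OF sfH i1(1)]) (use \<Phi>mF H_def in simp)
      have a5: "AE x in M. real_cond_exp M H (\<Phi> (Suc i)) x = \<Phi> i x"
      proof -
        have "AE x in M. real_cond_exp M H (real_cond_exp M (Fs (Pk (Suc i))) Y) x = real_cond_exp M H Y x"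
          using sigma_finite_subalgebra.real_cond_exp_nested_subalg[OF sfH subF[OF PkS[of "Suc i"]] _ Yi] i
            monoF[of "Pk i" "Pk (Suc i)"] unfolding H_def Pk_def by auto
        then show ?thesis unfolding \<Phi>_def H_def using False by simp
      qed
      have ae: "AE x in M. real_cond_exp M H W x = \<Phi> i x"
        using a1 a2 a3 a4 a5 by eventually_elim simp
      have "Ep M p (\<Phi> i) = Ep M p (real_cond_exp M H W)"
        by (rule Ep_cong_AE) (use ae in \<open>auto simp: eq_commute\<close>)
      also have "\<dots> \<le> Ep M p W" by (rule cond_exp_Lp(2)[OF sfH fm p1(1) WLp])
      finally show ?thesis unfolding W_def by (rule nsq_mono)
    qed
    have "nsq M p (\<Phi> i) + (p - 1) * nsq M p (\<lambda>\<omega>. \<Phi> (Suc i) \<omega> - \<Phi> i \<omega>)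
        \<le> nsq M p (\<lambda>\<omega>. \<Phi> i \<omega> + (\<Phi> (Suc i) \<omega> - \<Phi> i \<omega>))"
      by (rule dyadic[OF p x y hyp])
    then show ?thesis by simp
  qed
  have indep: "P.indep_set (sets (Fs (Pk i))) (sets (Fs (Bk i)))" if i: "0 < i" "i < k" for i
  proof -
    have iL: "L \<le> i * L" using i by simp
    have cP: "card (Pk i) = i * L" unfolding Pk_def by simp
    have cB: "card (Bk i) = L" unfolding Bk_def by simp
    have iL1: "1 \<le> i * L" using iL L0 by linarith
    have MP: "Max (Pk i) = i * L" unfolding Pk_def using iL1 by (intro Max_eqI) auto
    have mB: "Min (Bk i) = i * L + 1" unfolding Bk_def using L0 by (intro Min_eqI) auto
    have ne: "Pk i \<noteq> {}" "Bk i \<noteq> {}" unfolding Pk_def Bk_def using iL1 L0 by auto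
    have D: "\<And>J K. J \<subseteq> {1..n} \<Longrightarrow> K \<subseteq> {1..n} \<Longrightarrow> d \<le> card J \<Longrightarrow> d \<le> card K \<Longrightarrow> J \<noteq> {} \<Longrightarrow> K \<noteq> {}
        \<Longrightarrow> Max J < Min K \<Longrightarrow> P.indep_set (sets (arr_sigma M N X d J)) (sets (arr_sigma M N X d K))"
      using assms(10) unfolding dissociated_def by blast
    have Pi: "Pk i \<subseteq> {1..n}" using PkS i by simp
    have Bi: "Bk i \<subseteq> {1..n}" using BkN i by simp
    show ?thesis unfolding Fs_def
    proof (rule D[OF Pi Bi _ _ ne])
      show "d \<le> card (Pk i)" unfolding cP using dL iL by linarith
      show "d \<le> card (Bk i)" using cB dL by simp
      show "Max (Pk i) < Min (Bk i)" using MP mB by simp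
    qed
  qed
  have K2: "nsq M p (g i) \<le> nsq M p (\<lambda>\<omega>. \<Phi> (Suc i) \<omega> - \<Phi> i \<omega>)" if i: "i < k" for i
  proof -
    define G where "G = Fs (Bk i)"
    have sfG: "sigma_finite_subalgebra M G" unfolding G_def using sfF BkN i by simp
    have i1: "integrable M (\<Phi> i)" "integrable M (\<Phi> (Suc i))" using \<Phi>int i by auto
    have y: "inLp M p (\<lambda>\<omega>. \<Phi> (Suc i) \<omega> - \<Phi> i \<omega>)"
      using inLp_diff[OF p1(3) \<Phi>Lp \<Phi>Lp] i by simp
    have b1: "AE x in M. real_cond_exp M G (\<lambda>\<omega>. \<Phi> (Suc i) \<omega> - \<Phi> i \<omega>) x = real_cond_exp M G (\<Phi> (Suc i)) x - real_cond_exp M G (\<Phi> i) x"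
      by (rule sigma_finite_subalgebra.real_cond_exp_diff[OF sfG i1(2) i1(1)])
    have b2: "AE x in M. real_cond_exp M G (\<Phi> (Suc i)) x = g i x"
    proof -
      have "AE x in M. real_cond_exp M G (real_cond_exp M (Fs (Pk (Suc i))) Y) x = real_cond_exp M G Y x"
        using sigma_finite_subalgebra.real_cond_exp_nested_subalg[OF sfG subF[OF PkS[of "Suc i"]] _ Yi] i
          monoF[OF BkS[of i]] unfolding G_def by auto
      then show ?thesis unfolding \<Phi>_def G_def g_def by simp
    qed
    have b3: "AE x in M. real_cond_exp M G (\<Phi> i) x = 0"
    proof (cases "i = 0")
      case True
      have "AE x in M. real_cond_exp M G (\<lambda>_. 0) x = 0"
        by (rule sigma_finite_subalgebra.real_cond_exp_F_meas[OF sfG]) auto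
      then show ?thesis using True unfolding \<Phi>_def by simp
    next
      case False
      have "AE x in M. real_cond_exp M G (\<Phi> i) x = (\<integral>x. \<Phi> i x \<partial>M)"
        unfolding G_def
        by (rule indep_cond_exp_const[OF ps subF[OF PkS] subF[OF BkN] indep i1(1) \<Phi>mF]) (use i False in auto)
      moreover have "(\<integral>x. \<Phi> i x \<partial>M) = 0"
        using sigma_finite_subalgebra.real_cond_exp_int(2)[OF sfF[OF PkS[of i]] Yi] i False Y0
        unfolding \<Phi>_def by simp
      ultimately show ?thesis by simp
    qed
    have ae: "AE x in M. real_cond_exp M G (\<lambda>\<omega>. \<Phi> (Suc i) \<omega> - \<Phi> i \<omega>) x = g i x"
      using b1 b2 b3 by eventually_elim simp
    have "Ep M p (g i) = Ep M p (real_cond_exp M G (\<lambda>\<omega>. \<Phi> (Suc i) \<omega> - \<Phi> i \<omega>))"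
      by (rule Ep_cong_AE) (use ae in \<open>auto simp: eq_commute g_def\<close>)
    also have "\<dots> \<le> Ep M p (\<lambda>\<omega>. \<Phi> (Suc i) \<omega> - \<Phi> i \<omega>)" by (rule cond_exp_Lp(2)[OF sfG fm p1(1) y])
    finally show ?thesis by (rule nsq_mono)
  qed
  have sumineq: "(\<Sum>i<k. (p - 1) * nsq M p (g i)) \<le> 1"
  proof -
    have "(\<Sum>i<k. (p - 1) * nsq M p (g i)) \<le> (\<Sum>i<k. nsq M p (\<Phi> (Suc i)) - nsq M p (\<Phi> i))"
    proof (rule sum_mono)
      fix i assume "i \<in> {..<k}"
      then have i: "i < k" by simp
      have "(p - 1) * nsq M p (g i) \<le> (p - 1) * nsq M p (\<lambda>\<omega>. \<Phi> (Suc i) \<omega> - \<Phi> i \<omega>)"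
        using K2[OF i] p by (intro mult_left_mono) auto
      then show "(p - 1) * nsq M p (g i) \<le> nsq M p (\<Phi> (Suc i)) - nsq M p (\<Phi> i)"
        using K1[OF i] by linarith
    qed
    also have "\<dots> = nsq M p (\<Phi> k) - nsq M p (\<Phi> 0)" by (rule sum_lessThan_telescope)
    also have "\<dots> \<le> 1" using \<Phi>nY[of k] nsq0 unfolding \<Phi>_def by simp
    finally show ?thesis .
  qed
  obtain i where i: "i < k" "(p - 1) * nsq M p (g i) \<le> 1 / real k"
  proof (rule ccontr)
    assume "\<not> thesis"
    then have H: "\<And>i. i < k \<Longrightarrow> 1 / real k < (p - 1) * nsq M p (g i)" using that by force
    have "(\<Sum>i<k. 1 / real k) < (\<Sum>i<k. (p - 1) * nsq M p (g i))"
      using k1 H by (intro sum_strict_mono) (auto simp: lessThan_empty_iff)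
    moreover have "(\<Sum>i<k. 1 / real k) = 1" using k1 by simp
    ultimately show False using sumineq by simp
  qed
  have ng: "nsq M p (g i) \<le> E"
  proof -
    have "1 / real k \<le> 4 * c" using k4c k1 by (simp add: divide_le_eq mult.commute)
    then have "1 / real k \<le> (p - 1) * E" unfolding c_E by (simp add: mult.commute)
    then have "(p - 1) * nsq M p (g i) \<le> (p - 1) * E" using i(2) by linarith
    then show ?thesis using p by simp
  qed
  have gLp: "inLp M p (g i)" unfolding g_def by (rule cond_exp_Lp(1)[OF sfF[OF BkN[OF i(1)]] fm p1(1) YLp])
  have Eg: "Ep M p (g i) \<le> \<epsilon> powr (p + 1)"
  proof -
    have "Ep M p (g i) = (nsq M p (g i)) powr (p / 2)"
      unfolding nsq_def using Ep_nonneg[of M p "g i"] p1 by (simp add: powr_powr)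
    also have "\<dots> \<le> E powr (p / 2)" using ng p1 nsq_nonneg by (intro powr_mono2) auto
    also have "\<dots> = \<epsilon> powr (p + 1)"
    proof -
      have h: "2 * (p + 1) / p * (p / 2) = p + 1" using p1 by (simp add: field_simps)
      show ?thesis unfolding E_def powr_powr h by (rule refl)
    qed
    finally show ?thesis .
  qed
  show ?thesis
  proof (intro exI conjI allI impI)
    show "1 \<le> i * L + 1" by simp
    show "(i + 1) * L \<le> n"
    proof -
      have "i + 1 \<le> k" using i(1) by simp
      then have "(i + 1) * L \<le> k * L" by (rule mult_right_mono) simp
      then show ?thesis using kL by simp
    qed
    show "cconst \<epsilon> p * real n \<le> real (card {i * L + 1..(i + 1) * L})"
      using L1 unfolding c_def by simp
    fix J assume J: "J \<subseteq> {i * L + 1..(i + 1) * L} \<and> d \<le> card J"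
    have JB: "J \<subseteq> Bk i" using J unfolding Bk_def by auto
    have JN: "J \<subseteq> {1..n}" using JB BkN[OF i(1)] by auto
    define Z where "Z = real_cond_exp M (Fs J) Y"
    have Zm [measurable]: "Z \<in> borel_measurable M" unfolding Z_def by simp
    have ZLp: "inLp M p Z" unfolding Z_def by (rule cond_exp_Lp(1)[OF sfF[OF JN] fm p1(1) YLp])
    have aeZ: "AE x in M. real_cond_exp M (Fs J) (g i) x = Z x"
      unfolding g_def Z_def
      using sigma_finite_subalgebra.real_cond_exp_nested_subalg[OF sfF[OF JN] subF[OF BkN[OF i(1)]] monoF[OF JB] Yi] .
    have EZ: "Ep M p Z \<le> \<epsilon> powr (p + 1)"
    proof -
      have "Ep M p Z = Ep M p (real_cond_exp M (Fs J) (g i))"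
        by (rule Ep_cong_AE) (use aeZ in \<open>auto simp: eq_commute\<close>)
      also have "\<dots> \<le> Ep M p (g i)" by (rule cond_exp_Lp(2)[OF sfF[OF JN] fm p1(1) gLp])
      finally show ?thesis using Eg by simp
    qed
    have ep0: "0 < \<epsilon> powr p" using assms(4) by simp
    have mk: "measure M {x \<in> space M. \<epsilon> powr p \<le> \<bar>Z x\<bar> powr p} \<le> (\<integral>x. \<bar>Z x\<bar> powr p \<partial>M) / \<epsilon> powr p"
      using ZLp unfolding inLp_def by (intro integral_Markov_inequality_measure[of _ _ "space M"] ep0) auto
    also have "\<dots> \<le> \<epsilon> powr (p + 1) / \<epsilon> powr p"
      using EZ ep0 unfolding Ep_def by (intro divide_right_mono) auto
    also have "\<dots> = \<epsilon>" using assms(4) by (simp add: powr_add)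
    finally have mk2: "measure M {x \<in> space M. \<epsilon> powr p \<le> \<bar>Z x\<bar> powr p} \<le> \<epsilon>" .
    have sub: "{x \<in> space M. \<epsilon> < \<bar>Z x\<bar>} \<subseteq> {x \<in> space M. \<epsilon> powr p \<le> \<bar>Z x\<bar> powr p}"
      using assms(4) p1 by (auto intro!: powr_mono2)
    have "measure M {x \<in> space M. \<epsilon> < \<bar>Z x\<bar>} \<le> measure M {x \<in> space M. \<epsilon> powr p \<le> \<bar>Z x\<bar> powr p}"
      by (rule P.finite_measure_mono[OF sub]) measurable
    with mk2 have m1: "measure M {x \<in> space M. \<epsilon> < \<bar>Z x\<bar>} \<le> \<epsilon>" by simp
    have eq: "{x \<in> space M. \<bar>Z x\<bar> \<le> \<epsilon>} = space M - {x \<in> space M. \<epsilon> < \<bar>Z x\<bar>}" by auto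
    have "measure M {x \<in> space M. \<bar>Z x\<bar> \<le> \<epsilon>} = 1 - measure M {x \<in> space M. \<epsilon> < \<bar>Z x\<bar>}"
      unfolding eq by (rule P.prob_compl) measurable
    with m1 have "1 - \<epsilon> \<le> measure M {x \<in> space M. \<bar>Z x\<bar> \<le> \<epsilon>}" by simp
    then show "1 - \<epsilon> \<le> measure M {\<omega> \<in> space M. \<bar>real_cond_exp M (arr_sigma M N X d J) (\<lambda>\<omega>. f (arr_vec d {1..n} X \<omega>)) \<omega>\<bar> \<le> \<epsilon>}"
      unfolding Z_def Fs_def Y_def .
  qed
qed

end
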